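(* Let $n \geq 3$ be an integer and let $D_{2n} = \langle a, b \mid a^n = b^2 = e,\ ab = ba^{-1} \rangle$ be the dihedral group of order $2n$. Then the order supergraph $\mathcal{S}(D_{2n})$ is cyclically separable if and only if all of the following hold: (i) $n$ is not a power of $2$; (ii) $n \geq 5$; (iii) $n \neq 6$ and $n \neq 12$.
   Context: All graphs are simple and undirected. For a finite group $G$, the order supergraph $\mathcal{S}(G)$ is the graph with vertex set $G$ in which two distinct vertices $x,y$ are adjacent if and only if the order of $x$ divides the order of $y$ or the order of $y$ divides the order of $x$. For a graph $\Gamma$, a vertex cutset is a set $S$ of vertices such that $\Gamma - S$ is disconnected; a cyclic vertex cutset is a vertex cutset $S$ such that $\Gamma - S$ has at least two connected components each of which contains a cycle. $\Gamma$ is called cyclically separable if it has a cyclic vertex cutset. *)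

theory Defs
  imports "HOL-Algebra.Multiplicative_Group"
begin

text \<open>Dihedral group of order 2n, concretely: the pair (i, j) with i < n, j < 2
  stands for a^i b^j, where a = (1,0) and b = (0,1).  Multiplication follows from
  b a^k = a^(-k) b:  a^i b^j a^k b^l = a^(i + (-1)^j k) b^(j+l).\<close>

definition dihedral :: "nat \<Rightarrow> (nat \<times> nat) monoid" where
  "dihedral n = \<lparr> carrier = {(i, j). i < n \<and> j < 2},
     mult = (\<lambda>(i, j) (k, l).
        ((i + (if j = 0 then k else n - k)) mod n, (j + l) mod 2)),
     one = (0, 0) \<rparr>"

definition order_supergraph_adj :: "('a, 'b) monoid_scheme \<Rightarrow> 'a \<Rightarrow> 'a \<Rightarrow> bool" where
  "order_supergraph_adj G x y \<longleftrightarrow>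
     x \<in> carrier G \<and> y \<in> carrier G \<and> x \<noteq> y \<and>
     (group.ord G x dvd group.ord G y \<or> group.ord G y dvd group.ord G x)"

definition induced_adj :: "('a \<Rightarrow> 'a \<Rightarrow> bool) \<Rightarrow> 'a set \<Rightarrow> 'a \<Rightarrow> 'a \<Rightarrow> bool" where
  "induced_adj E W x y \<longleftrightarrow> x \<in> W \<and> y \<in> W \<and> E x y"

definition component :: "('a \<Rightarrow> 'a \<Rightarrow> bool) \<Rightarrow> 'a set \<Rightarrow> 'a \<Rightarrow> 'a set" where
  "component E W x = {y. (induced_adj E W)\<^sup>*\<^sup>* x y}"

definition has_cycle_in :: "('a \<Rightarrow> 'a \<Rightarrow> bool) \<Rightarrow> 'a set \<Rightarrow> bool" where
  "has_cycle_in E C \<longleftrightarrow> (\<exists>cs. length cs \<ge> 3 \<and> distinct cs \<and> set cs \<subseteq> C \<and>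
      (\<forall>i < length cs. E (cs ! i) (cs ! ((i + 1) mod length cs))))"

definition cyclic_vertex_cutset :: "'a set \<Rightarrow> ('a \<Rightarrow> 'a \<Rightarrow> bool) \<Rightarrow> 'a set \<Rightarrow> bool" where
  "cyclic_vertex_cutset V E S \<longleftrightarrow> S \<subseteq> V \<and>
     (\<exists>x y. x \<in> V - S \<and> y \<in> V - S \<and>
        component E (V - S) x \<noteq> component E (V - S) y \<and>
        has_cycle_in E (component E (V - S) x) \<and>
        has_cycle_in E (component E (V - S) y))"

definition cyclically_separable :: "'a set \<Rightarrow> ('a \<Rightarrow> 'a \<Rightarrow> bool) \<Rightarrow> bool" where
  "cyclically_separable V E \<longleftrightarrow> (\<exists>S. cyclic_vertex_cutset V E S)"

end

theory Submission
  imports Defs "HOL-Computational_Algebra.Primes"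
begin
lemma dih_carrier: "carrier (dihedral n) = {(i,j). i<n \<and> j<2}"
  by (simp add: dihedral_def)
lemma dih_mult: "(i,j) \<otimes>\<^bsub>dihedral n\<^esub> (k,l) = ((i + (if j=0 then k else n-k)) mod n, (j+l) mod 2)"
  by (simp add: dihedral_def)
lemma dih_one: "\<one>\<^bsub>dihedral n\<^esub> = (0,0)"
  by (simp add: dihedral_def)

lemma modeq_int: "(a::nat) mod n = b mod n \<longleftrightarrow> int a mod int n = int b mod int n"
  by (metis of_nat_mod of_nat_eq_iff)

lemma aux_m1: "((a::int) + int n * 2 - b) mod int n = (a + int n - b) mod int n"
proof -
  have "a + int n * 2 - b = (a + int n - b) + int n" by simp
  then show ?thesis by (metis mod_add_self2)
qed
lemma aux_m2: "((a::int) + (int n + p) - b) mod int n = (a + p - b) mod int n"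
proof -
  have "a + (int n + p) - b = (a + p - b) + int n" by simp
  then show ?thesis by (metis mod_add_self2)
qed

lemma dih_assoc:
  fixes i n k p j l q :: nat
  assumes "i < n" "k < n" "p < n" "j < 2" "l < 2" "q < 2"
  shows "((i + (if j=0 then k else n-k)) mod n + (if (j+l) mod 2 = 0 then p else n - p)) mod n
       = (i + (if j = 0 then (k + (if l = 0 then p else n-p)) mod n else n - (k + (if l = 0 then p else n-p)) mod n)) mod n"
proof -
  have n: "n > 0" using assms by simp
  have j: "j = 0 \<or> j = 1" and l: "l = 0 \<or> l = 1" using assms by auto
  have m: "(x::nat) mod n \<le> n" for x using n by (meson le_less mod_less_divisor)
  show ?thesis using j l assms m[of "k+p"] m[of "k + (n-p)"]
    by (auto simp: modeq_int of_nat_mod of_nat_diff mod_simps algebra_simps aux_m1 aux_m2)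
qed

lemma dih_group: assumes "n > 0" shows "group (dihedral n)"
proof (rule groupI)
  fix x y assume "x \<in> carrier (dihedral n)" "y \<in> carrier (dihedral n)"
  then show "x \<otimes>\<^bsub>dihedral n\<^esub> y \<in> carrier (dihedral n)"
    using assms by (auto simp: dih_carrier dih_mult)
next
  show "\<one>\<^bsub>dihedral n\<^esub> \<in> carrier (dihedral n)" using assms by (simp add: dih_carrier dih_one)
next
  fix x y z assume "x \<in> carrier (dihedral n)" "y \<in> carrier (dihedral n)" "z \<in> carrier (dihedral n)"
  then obtain i j k l p q where x: "x = (i,j)" "i<n" "j<2" and y: "y = (k,l)" "k<n" "l<2"
    and z: "z = (p,q)" "p<n" "q<2" by (auto simp: dih_carrier)
  show "x \<otimes>\<^bsub>dihedral n\<^esub> y \<otimes>\<^bsub>dihedral n\<^esub> z = x \<otimes>\<^bsub>dihedral n\<^esub> (y \<otimes>\<^bsub>dihedral n\<^esub> z)"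
    using dih_assoc[of i n k p j l q] x y z
    by (auto simp: dih_mult mod_simps add.assoc)
next
  fix x assume "x \<in> carrier (dihedral n)"
  then show "\<one>\<^bsub>dihedral n\<^esub> \<otimes>\<^bsub>dihedral n\<^esub> x = x" by (auto simp: dih_carrier dih_mult dih_one)
next
  fix x assume "x \<in> carrier (dihedral n)"
  then obtain i j where x: "x = (i,j)" "i<n" "j<2" by (auto simp: dih_carrier)
  show "\<exists>y\<in>carrier (dihedral n). y \<otimes>\<^bsub>dihedral n\<^esub> x = \<one>\<^bsub>dihedral n\<^esub>"
  proof (cases "j = 0")
    case True
    then show ?thesis using x assms
      by (intro bexI[of _ "((n - i) mod n, 0)"]) (auto simp: dih_carrier dih_mult dih_one mod_simps)
  next
    case False
    then have "j = 1" using x by auto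
    then show ?thesis using x assms
      by (intro bexI[of _ "(i, 1)"]) (auto simp: dih_carrier dih_mult dih_one)
  qed
qed


lemma rot_pow: assumes "i < n" shows "(i,0) [^]\<^bsub>dihedral n\<^esub> (m::nat) = (i*m mod n, 0)"
proof (induction m)
  case 0 then show ?case by (simp add: dih_one)
next
  case (Suc m) then show ?case by (simp add: dih_mult mod_simps algebra_simps)
qed

lemma ref_pow: assumes "i < n" shows "(i,1) [^]\<^bsub>dihedral n\<^esub> (m::nat) = (if even m then (0,0) else (i,1))"
proof (induction m)
  case 0 then show ?case by (simp add: dih_one)
next
  case (Suc m) then show ?case using assms by (auto simp: dih_mult)
qed

lemma dvd_mult_iff_div_gcd:
  fixes i n m :: nat assumes "n > 0"
  shows "n dvd i * m \<longleftrightarrow> n div gcd i n dvd m"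
proof -
  define g where "g = gcd i n"
  have g0: "g > 0" using assms by (simp add: g_def)
  obtain i' where i': "i = g * i'" unfolding g_def by (metis gcd_dvd1 dvdE)
  obtain n' where n': "n = g * n'" unfolding g_def by (metis gcd_dvd2 dvdE)
  have cop: "coprime n' i'"
    using div_gcd_coprime[of i n] assms i' n' g0 unfolding g_def[symmetric]
    by (simp add: coprime_commute)
  have "n dvd i * m \<longleftrightarrow> n' dvd i' * m" using i' n' g0 by (simp add: mult.assoc)
  also have "\<dots> \<longleftrightarrow> n' dvd m" using cop by (simp add: coprime_dvd_mult_right_iff mult.commute)
  also have "n' = n div g" using n' g0 by simp
  finally show ?thesis by (simp add: g_def)
qed

lemma ord_rot: assumes "i < n" shows "group.ord (dihedral n) (i,0) = n div gcd i n"
proof -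
  have n: "n > 0" using assms by simp
  interpret group "dihedral n" using dih_group n .
  have c: "(i,0) \<in> carrier (dihedral n)" using assms by (simp add: dih_carrier)
  show ?thesis
    unfolding ord_unique[OF c] rot_pow[OF assms] dih_one
    using dvd_mult_iff_div_gcd[OF n] by (simp add: dvd_eq_mod_eq_0)
qed

lemma ord_ref: assumes "i < n" shows "group.ord (dihedral n) (i,1) = 2"
proof -
  have n: "n > 0" using assms by simp
  interpret group "dihedral n" using dih_group n .
  have c: "(i,1) \<in> carrier (dihedral n)" using assms by (simp add: dih_carrier)
  show ?thesis
    unfolding ord_unique[OF c] ref_pow[OF assms] dih_one by simp
qed

lemma ord_rot_d: assumes "d dvd n" "0 < n" "coprime j d" "j < d"
  shows "group.ord (dihedral n) ((n div d) * j, 0) = d" "(n div d) * j < n"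
proof -
  obtain c where c: "n = c * d" using assms(1) by (metis dvdE mult.commute)
  have c0: "c > 0" "d > 0" using c assms by auto
  have cd: "n div d = c" using c c0 by simp
  show lt: "(n div d) * j < n" using cd c c0 assms(4) by simp
  have "gcd (c*j) n = c * gcd j d" using c by (simp add: gcd_mult_distrib_nat)
  also have "\<dots> = c" using assms(3) by simp
  finally show "group.ord (dihedral n) ((n div d) * j, 0) = d"
    using ord_rot[OF lt] cd c c0 by simp
qed

lemma comp_self: "x \<in> component E W x"
  by (simp add: component_def)

lemma star_in: "(induced_adj E W)\<^sup>*\<^sup>* x y \<Longrightarrow> x \<in> W \<Longrightarrow> y \<in> W"
  by (induction rule: rtranclp_induct) (auto simp: induced_adj_def)

lemma comp_sub: "x \<in> W \<Longrightarrow> component E W x \<subseteq> W"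
  using star_in by (fastforce simp: component_def)

lemma star_sym:
  assumes sym: "\<And>a b. E a b \<Longrightarrow> E b a" and "(induced_adj E W)\<^sup>*\<^sup>* x y"
  shows "(induced_adj E W)\<^sup>*\<^sup>* y x"
  using assms(2)
proof (induction rule: rtranclp_induct)
  case base then show ?case by simp
next
  case (step y z)
  then have "induced_adj E W z y" using sym by (auto simp: induced_adj_def)
  then show ?case using step(3) by (rule converse_rtranclp_into_rtranclp)
qed

lemma comp_eq:
  assumes sym: "\<And>a b. E a b \<Longrightarrow> E b a" and "y \<in> component E W x"
  shows "component E W y = component E W x"
proof -
  have xy: "(induced_adj E W)\<^sup>*\<^sup>* x y" using assms(2) by (simp add: component_def)
  have yx: "(induced_adj E W)\<^sup>*\<^sup>* y x" using star_sym[OF sym xy] .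
  show ?thesis unfolding component_def
    using xy yx by (auto intro: rtranclp_trans)
qed

lemma comp_join:
  assumes sym: "\<And>a b. E a b \<Longrightarrow> E b a"
    and a: "a \<in> component E W x" and b: "b \<in> component E W y"
    and W: "a \<in> W" "b \<in> W" and ab: "a = b \<or> E a b"
  shows "component E W x = component E W y"
proof -
  have "b \<in> component E W a"
    using ab W by (auto simp: component_def induced_adj_def)
  then have "component E W b = component E W a" using comp_eq[of E] sym by blast
  moreover have "component E W a = component E W x" using comp_eq[of E] sym a by blast
  moreover have "component E W b = component E W y" using comp_eq[of E] sym b by blast
  ultimately show ?thesis by simp
qed

lemma comp_closed:
  assumes "x \<in> A" and cl: "\<And>a b. a \<in> A \<Longrightarrow> induced_adj E W a b \<Longrightarrow> b \<in> A"
  shows "component E W x \<subseteq> A"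
proof
  fix y assume "y \<in> component E W x"
  then have "(induced_adj E W)\<^sup>*\<^sup>* x y" by (simp add: component_def)
  then show "y \<in> A" by (induction rule: rtranclp_induct) (use assms in auto)
qed

lemma cycle_three:
  assumes "has_cycle_in E C"
  shows "\<exists>a b c. a \<in> C \<and> b \<in> C \<and> c \<in> C \<and> a \<noteq> b \<and> a \<noteq> c \<and> b \<noteq> c"
proof -
  obtain cs where cs: "length cs \<ge> 3" "distinct cs" "set cs \<subseteq> C"
    using assms by (auto simp: has_cycle_in_def)
  obtain a b c r where "cs = a # b # c # r" using cs(1)
    by (metis Suc_le_length_iff numeral_3_eq_3)
  then show ?thesis using cs by auto
qed

lemma triangle_cycle:
  assumes "E a b" "E b c" "E c a" "a \<noteq> b" "a \<noteq> c" "b \<noteq> c" "a \<in> C" "b \<in> C" "c \<in> C"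
  shows "has_cycle_in E C"
  unfolding has_cycle_in_def
proof (intro exI[of _ "[a,b,c]"] conjI allI impI)
  fix i assume "i < length [a,b,c]"
  then have "i = 0 \<or> i = 1 \<or> i = 2" by auto
  then show "E ([a, b, c] ! i) ([a, b, c] ! ((i + 1) mod length [a, b, c]))"
    using assms by auto
qed (use assms in auto)

lemma card_le2_three:
  assumes "finite R" "card R \<le> 2" "a \<in> R" "b \<in> R" "c \<in> R" "a \<noteq> b" "a \<noteq> c" "b \<noteq> c"
  shows False
proof -
  have "card {a,b,c} \<le> card R" using assms by (intro card_mono) auto
  then show False using assms by simp
qed


lemma yes_cut:
  assumes sym: "\<And>a b. E a b \<Longrightarrow> E b a"
    and T1: "{aA,aB,aC} \<subseteq> V" and T2: "{bA,bB,bC} \<subseteq> V"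
    and t1: "E aA aB" "E aB aC" "E aC aA" "aA \<noteq> aB" "aA \<noteq> aC" "aB \<noteq> aC"
    and t2: "E bA bB" "E bB bC" "E bC bA" "bA \<noteq> bB" "bA \<noteq> bC" "bB \<noteq> bC"
    and no: "\<And>u v. u \<in> {aA,aB,aC} \<Longrightarrow> v \<in> {bA,bB,bC} \<Longrightarrow> \<not> E u v"
  shows "cyclically_separable V E"
proof -
  let ?A = "{aA,aB,aC}" and ?B = "{bA,bB,bC}"
  define S where "S = V - (?A \<union> ?B)"
  have X: "V - S = ?A \<union> ?B" using T1 T2 by (auto simp: S_def)
  have disj: "?A \<inter> ?B = {}"
  proof (rule ccontr)
    assume "?A \<inter> ?B \<noteq> {}"
    then obtain u where u: "u \<in> ?A" "u \<in> ?B" by blast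
    obtain w where w: "w \<in> ?A" "E w u" using u(1) t1 sym by blast
    show False using no[OF w(1) u(2)] w(2) by simp
  qed
  have cA: "component E (V - S) aA \<subseteq> ?A"
  proof (rule comp_closed)
    fix a b assume "a \<in> ?A" "induced_adj E (V - S) a b"
    then show "b \<in> ?A" using no X by (auto simp: induced_adj_def)
  qed simp
  have cB: "component E (V - S) bA \<subseteq> ?B"
  proof (rule comp_closed)
    fix a b assume ab: "a \<in> ?B" "induced_adj E (V - S) a b"
    then have "b \<in> ?A \<union> ?B" "E a b" using X by (auto simp: induced_adj_def)
    then show "b \<in> ?B" using no[of b a] sym[of a b] ab(1) by blast
  qed simp
  have inA: "?A \<subseteq> component E (V - S) aA"
    using t1 sym X by (auto simp: component_def induced_adj_def)
  have inB: "?B \<subseteq> component E (V - S) bA"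
    using t2 sym X by (auto simp: component_def induced_adj_def)
  have f1: "S \<subseteq> V" by (auto simp: S_def)
  have f2: "aA \<in> V - S" "bA \<in> V - S" using X by auto
  have f3: "component E (V - S) aA \<noteq> component E (V - S) bA"
    using cA inB disj by auto
  have f4: "has_cycle_in E (component E (V - S) aA)"
    using triangle_cycle[OF t1] inA by auto
  have f5: "has_cycle_in E (component E (V - S) bA)"
    using triangle_cycle[OF t2] inB by auto
  have "cyclic_vertex_cutset V E S"
    unfolding cyclic_vertex_cutset_def using f1 f2 f3 f4 f5 by blast
  then show ?thesis by (auto simp: cyclically_separable_def)
qed

lemma no_cut:
  assumes sym: "\<And>a b. E a b \<Longrightarrow> E b a"
    and cover: "V \<subseteq> U \<union> P \<union> RT \<union> RF \<union> RS"
    and univ: "\<And>u v. u \<in> U \<Longrightarrow> v \<in> V \<Longrightarrow> u \<noteq> v \<Longrightarrow> E u v"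
    and Pc: "\<And>a b. a \<in> P \<Longrightarrow> b \<in> P \<Longrightarrow> a \<noteq> b \<Longrightarrow> E a b"
    and Qc: "\<And>a b. a \<in> RT \<union> RS \<Longrightarrow> b \<in> RT \<union> RS \<Longrightarrow> a \<noteq> b \<Longrightarrow> E a b"
    and PRS: "\<And>a b. a \<in> P \<Longrightarrow> b \<in> RS \<Longrightarrow> a \<noteq> b \<Longrightarrow> E a b"
    and RFn: "\<And>a b. a \<in> RF \<Longrightarrow> E a b \<Longrightarrow> b \<in> U \<union> P \<union> RF"
    and RTn: "\<And>a b. a \<in> RT \<Longrightarrow> E a b \<Longrightarrow> b \<in> U \<union> RT \<union> RS"
    and RTf: "finite RT" "card RT \<le> 2" and RFf: "finite RF" "card RF \<le> 2"
  shows "\<not> cyclically_separable V E"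
proof
  assume "cyclically_separable V E"
  then obtain S x y where S: "S \<subseteq> V" and xy: "x \<in> V - S" "y \<in> V - S"
    and ne: "component E (V - S) x \<noteq> component E (V - S) y"
    and cx: "has_cycle_in E (component E (V - S) x)"
    and cy: "has_cycle_in E (component E (V - S) y)"
    by (auto simp: cyclically_separable_def cyclic_vertex_cutset_def)
  define X where "X = V - S"
  have noU: "U \<inter> X = {}"
  proof (rule ccontr)
    assume "U \<inter> X \<noteq> {}"
    then obtain u where u: "u \<in> U" "u \<in> X" by blast
    have "component E X u = component E X x"
      using comp_join[OF sym comp_self[of u E X] comp_self[of x E X]] u xy univ[of u x] X_def by auto
    moreover have "component E X u = component E X y"
      using comp_join[OF sym comp_self[of u E X] comp_self[of y E X]] u xy univ[of u y] X_def by auto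
    ultimately show False using ne X_def by simp
  qed
  have key: "(\<exists>p \<in> P. p \<in> component E X z) \<or> (\<exists>w \<in> RS. w \<in> component E X z)"
    if z: "z \<in> X" and cz: "has_cycle_in E (component E X z)" for z
  proof (rule ccontr)
    let ?c = "component E X z"
    assume "\<not> ?thesis"
    then have nP: "P \<inter> ?c = {}" and nRS: "RS \<inter> ?c = {}" by auto
    have csub: "?c \<subseteq> X" using comp_sub z .
    obtain a b c where abc: "a \<in> ?c" "b \<in> ?c" "c \<in> ?c" "a \<noteq> b" "a \<noteq> c" "b \<noteq> c"
      using cycle_three[OF cz] by blast
    have zc: "z \<in> ?c" by (rule comp_self)
    have "z \<in> V" using z X_def by auto
    then have "z \<in> RT \<or> z \<in> RF" using cover noU z nP nRS zc by blast
    then show False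
    proof
      assume z3: "z \<in> RT"
      have "?c \<subseteq> RT"
      proof
        fix w assume "w \<in> ?c"
        then have "(induced_adj E X)\<^sup>*\<^sup>* z w" by (simp add: component_def)
        then show "w \<in> RT"
        proof (induction rule: rtranclp_induct)
          case base then show ?case using z3 .
        next
          case (step a b)
          have "b \<in> ?c" using step(1,2) by (auto simp: component_def)
          moreover have "b \<in> X" "E a b" using step(2) by (auto simp: induced_adj_def)
          ultimately show ?case using RTn[OF step(3)] noU nRS by blast
        qed
      qed
      then show False using card_le2_three[OF RTf] abc by blast
    next
      assume z4: "z \<in> RF"
      have "?c \<subseteq> RF"
      proof
        fix w assume "w \<in> ?c"
        then have "(induced_adj E X)\<^sup>*\<^sup>* z w" by (simp add: component_def)
        then show "w \<in> RF"
        proof (induction rule: rtranclp_induct)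
          case base then show ?case using z4 .
        next
          case (step a b)
          have "b \<in> ?c" using step(1,2) by (auto simp: component_def)
          moreover have "b \<in> X" "E a b" using step(2) by (auto simp: induced_adj_def)
          ultimately show ?case using RFn[OF step(3)] noU nP by blast
        qed
      qed
      then show False using card_le2_three[OF RFf] abc by blast
    qed
  qed
  have x': "x \<in> X" and y': "y \<in> X" using xy X_def by auto
  have kx: "(\<exists>p \<in> P. p \<in> component E X x) \<or> (\<exists>w \<in> RS. w \<in> component E X x)"
    using key[OF x'] cx X_def by simp
  have ky: "(\<exists>p \<in> P. p \<in> component E X y) \<or> (\<exists>w \<in> RS. w \<in> component E X y)"
    using key[OF y'] cy X_def by simp
  have subx: "component E X x \<subseteq> X" using comp_sub x' .
  have suby: "component E X y \<subseteq> X" using comp_sub y' .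
  have "component E X x = component E X y"
  proof -
    obtain a where a: "a \<in> component E X x" "a \<in> P \<or> a \<in> RS" using kx by blast
    obtain b where b: "b \<in> component E X y" "b \<in> P \<or> b \<in> RS" using ky by blast
    have "a = b \<or> E a b"
      using a(2) b(2) Pc[of a b] Qc[of a b] PRS[of a b] PRS[of b a] sym[of b a] by blast
    then show ?thesis using comp_join[OF sym a(1) b(1)] a(1) b(1) subx suby by blast
  qed
  then show False using ne X_def by simp
qed

lemma adj_sym: "order_supergraph_adj G a b \<Longrightarrow> order_supergraph_adj G b a"
  by (auto simp: order_supergraph_adj_def)

lemma ord_char:
  assumes "x \<in> carrier (dihedral n)"
  shows "\<exists>i<n. (x = (i,0) \<and> group.ord (dihedral n) x = n div gcd i n) \<or>
                (x = (i,1) \<and> group.ord (dihedral n) x = 2)"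
proof -
  obtain i j where x: "x = (i,j)" "i < n" "j < 2" using assms by (auto simp: dih_carrier)
  then have "j = 0 \<or> j = 1" by auto
  then show ?thesis using x ord_rot[OF x(2)] ord_ref[OF x(2)] by auto
qed

lemma odd_decomp: "(n::nat) > 0 \<Longrightarrow> \<exists>k m. n = 2^k * m \<and> odd m"
proof (induction n rule: less_induct)
  case (less n)
  show ?case
  proof (cases "odd n")
    case True then show ?thesis by (intro exI[of _ 0] exI[of _ n]) simp
  next
    case False
    then obtain h where h: "n = 2 * h" by auto
    then have "h < n" "h > 0" using less.prems by auto
    then obtain k m where "h = 2^k * m" "odd m" using less.IH by blast
    then show ?thesis using h by (intro exI[of _ "Suc k"] exI[of _ m]) simp
  qed
qed

lemma l12: "(i::nat) < 12 \<Longrightarrow> i = 0 \<or> i = 1 \<or> i = 2 \<or> i = 3 \<or> i = 4 \<or> i = 5 \<or> i = 6 \<or> i = 7 \<or> i = 8 \<or> i = 9 \<or> i = 10 \<or> i = 11"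
  by presburger
lemma l6: "(i::nat) < 6 \<Longrightarrow> i = 0 \<or> i = 1 \<or> i = 2 \<or> i = 3 \<or> i = 4 \<or> i = 5"
  by presburger
lemma l3: "(i::nat) < 3 \<Longrightarrow> i = 0 \<or> i = 1 \<or> i = 2"
  by presburger

lemma small_facts:
  assumes "n = 3 \<or> n = 6 \<or> n = (12::nat)" "i < n"
  shows "n div gcd i n \<in> {1,2,3,4,6,12}"
    "n div gcd i n = 3 \<Longrightarrow> i = n div 3 \<or> i = 2*(n div 3)"
    "n div gcd i n = 4 \<Longrightarrow> i = n div 4 \<or> i = 3*(n div 4)"
proof -
  have "n div gcd i n \<in> {1,2,3,4,6,12} \<and> (n div gcd i n = 3 \<longrightarrow> i = n div 3 \<or> i = 2*(n div 3))
     \<and> (n div gcd i n = 4 \<longrightarrow> i = n div 4 \<or> i = 3*(n div 4))"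
    using assms(1)
  proof (elim disjE)
    assume "n = 3" then show ?thesis using l3[of i] assms(2) by (auto simp: gcd_non_0_nat)
  next
    assume "n = 6" then show ?thesis using l6[of i] assms(2) by (auto simp: gcd_non_0_nat)
  next
    assume "n = 12" then show ?thesis using l12[of i] assms(2) by (auto simp: gcd_non_0_nat)
  qed
  then show "n div gcd i n \<in> {1,2,3,4,6,12}"
    "n div gcd i n = 3 \<Longrightarrow> i = n div 3 \<or> i = 2*(n div 3)"
    "n div gcd i n = 4 \<Longrightarrow> i = n div 4 \<or> i = 3*(n div 4)" by blast+
qed

lemma small_no:
  assumes n: "n = 3 \<or> n = 6 \<or> n = (12::nat)"
  shows "\<not> cyclically_separable (carrier (dihedral n)) (order_supergraph_adj (dihedral n))"
proof -
  let ?V = "carrier (dihedral n)" and ?E = "order_supergraph_adj (dihedral n)"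
  let ?o = "group.ord (dihedral n)"
  have F1: "?o x \<in> {1,2,3,4,6,12}" if xV: "x \<in> ?V" for x
  proof -
    obtain i where i: "i < n" "(x = (i,0) \<and> ?o x = n div gcd i n) \<or> (x = (i,1) \<and> ?o x = 2)"
      using ord_char[OF xV] by blast
    then show ?thesis using small_facts(1)[OF n i(1)] by auto
  qed
  have F3: "x = (n div 3, 0) \<or> x = (2*(n div 3), 0)" if xV: "x \<in> ?V" and xo: "?o x = 3" for x
  proof -
    obtain i where i: "i < n" "(x = (i,0) \<and> ?o x = n div gcd i n) \<or> (x = (i,1) \<and> ?o x = 2)"
      using ord_char[OF xV] by blast
    then have "x = (i,0)" "n div gcd i n = 3" using xo by auto
    then show ?thesis using small_facts(2)[OF n i(1)] by auto
  qed
  have F4: "x = (n div 4, 0) \<or> x = (3*(n div 4), 0)" if xV: "x \<in> ?V" and xo: "?o x = 4" for x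
  proof -
    obtain i where i: "i < n" "(x = (i,0) \<and> ?o x = n div gcd i n) \<or> (x = (i,1) \<and> ?o x = 2)"
      using ord_char[OF xV] by blast
    then have "x = (i,0)" "n div gcd i n = 4" using xo by auto
    then show ?thesis using small_facts(3)[OF n i(1)] by auto
  qed
  have ED: "?o a dvd ?o b \<or> ?o b dvd ?o a" "a \<in> ?V" "b \<in> ?V" if "?E a b" for a b
    using that by (auto simp: order_supergraph_adj_def)
  have EI: "?E a b" if "a \<in> ?V" "b \<in> ?V" "a \<noteq> b" "?o a dvd ?o b \<or> ?o b dvd ?o a" for a b
    using that by (auto simp: order_supergraph_adj_def)
  define R3 where "R3 = {x \<in> ?V. ?o x = 3}"
  define R4 where "R4 = {x \<in> ?V. ?o x = 4}"
  have R3s: "R3 \<subseteq> {(n div 3, 0), (2*(n div 3), 0)}" using F3 by (auto simp: R3_def)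
  have R4s: "R4 \<subseteq> {(n div 4, 0), (3*(n div 4), 0)}" using F4 by (auto simp: R4_def)
  have c2: "card {a, b} \<le> 2" for a b :: "nat \<times> nat" by (simp add: card_insert_if)
  show ?thesis
  proof (rule no_cut[where U = "{x \<in> ?V. ?o x = 1 \<or> ?o x = 12}" and P = "{x \<in> ?V. ?o x = 2}"
        and RT = R3 and RF = R4 and RS = "{x \<in> ?V. ?o x = 6}"])
    show "?E a b \<Longrightarrow> ?E b a" for a b by (rule adj_sym)
    show "?V \<subseteq> {x \<in> ?V. ?o x = 1 \<or> ?o x = 12} \<union> {x \<in> ?V. ?o x = 2} \<union> R3 \<union> R4 \<union> {x \<in> ?V. ?o x = 6}"
      using F1 by (auto simp: R3_def R4_def)
    show "?E u v" if "u \<in> {x \<in> ?V. ?o x = 1 \<or> ?o x = 12}" "v \<in> ?V" "u \<noteq> v" for u v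
    proof -
      have "?o v dvd 12" using F1[OF that(2)] by auto
      then show ?thesis using that by (intro EI) auto
    qed
    show "?E a b" if "a \<in> {x \<in> ?V. ?o x = 2}" "b \<in> {x \<in> ?V. ?o x = 2}" "a \<noteq> b" for a b
      using that by (intro EI) auto
    show "?E a b" if "a \<in> R3 \<union> {x \<in> ?V. ?o x = 6}" "b \<in> R3 \<union> {x \<in> ?V. ?o x = 6}" "a \<noteq> b" for a b
      using that by (intro EI) (auto simp: R3_def)
    show "?E a b" if "a \<in> {x \<in> ?V. ?o x = 2}" "b \<in> {x \<in> ?V. ?o x = 6}" "a \<noteq> b" for a b
      using that by (intro EI) auto
    show "b \<in> {x \<in> ?V. ?o x = 1 \<or> ?o x = 12} \<union> {x \<in> ?V. ?o x = 2} \<union> R4" if "a \<in> R4" "?E a b" for a b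
    proof -
      have "?o b \<in> {1,2,3,4,6,12}" using F1 ED(3)[OF that(2)] by blast
      then show ?thesis using that ED[OF that(2)] by (auto simp: R4_def)
    qed
    show "b \<in> {x \<in> ?V. ?o x = 1 \<or> ?o x = 12} \<union> R3 \<union> {x \<in> ?V. ?o x = 6}" if "a \<in> R3" "?E a b" for a b
    proof -
      have "?o b \<in> {1,2,3,4,6,12}" using F1 ED(3)[OF that(2)] by blast
      then show ?thesis using that ED[OF that(2)] by (auto simp: R3_def)
    qed
    show "finite R3" using R3s finite_subset by blast
    show "card R3 \<le> 2" using card_mono[OF _ R3s] c2 by (meson finite.emptyI finite.insertI le_trans)
    show "finite R4" using R4s finite_subset by blast
    show "card R4 \<le> 2" using card_mono[OF _ R4s] c2 by (meson finite.emptyI finite.insertI le_trans)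
  qed
qed


lemma ord_dvd_n:
  assumes "x \<in> carrier (dihedral n)" "even n"
  shows "group.ord (dihedral n) x dvd n"
proof -
  obtain i where "i < n" "(x = (i,0) \<and> group.ord (dihedral n) x = n div gcd i n) \<or>
                (x = (i,1) \<and> group.ord (dihedral n) x = 2)" using ord_char[OF assms(1)] by blast
  then show ?thesis using assms(2)
    by (metis dvd_div_mult_self gcd_dvd2 dvd_triv_left)
qed

lemma pow2_no:
  assumes "n = 2^k" "n \<ge> 3"
  shows "\<not> cyclically_separable (carrier (dihedral n)) (order_supergraph_adj (dihedral n))"
proof
  let ?V = "carrier (dihedral n)" and ?E = "order_supergraph_adj (dihedral n)"
  let ?o = "group.ord (dihedral n)"
  have k: "k \<ge> 1" using assms by (cases k) auto
  have ev: "even n" using assms k by (simp add: dvd_power)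
  have pw: "\<exists>p. ?o x = 2^p" if "x \<in> ?V" for x
    using ord_dvd_n[OF that ev] assms(1) divides_primepow_nat[of 2 "?o x" k] by auto
  have complete: "?E a b" if ab: "a \<in> ?V" "b \<in> ?V" "a \<noteq> b" for a b
  proof -
    obtain p where p: "?o a = 2^p" using pw ab(1) by blast
    obtain q where q: "?o b = 2^q" using pw ab(2) by blast
    from p q have "?o a dvd ?o b \<or> ?o b dvd ?o a"
      by (metis le_imp_power_dvd nle_le)
    then show ?thesis using ab by (auto simp: order_supergraph_adj_def)
  qed
  assume "cyclically_separable ?V ?E"
  then obtain S x y where S: "S \<subseteq> ?V" and xy: "x \<in> ?V - S" "y \<in> ?V - S"
    and ne: "component ?E (?V - S) x \<noteq> component ?E (?V - S) y"
    unfolding cyclically_separable_def cyclic_vertex_cutset_def by blast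
  have "x = y \<or> ?E x y" using complete xy by blast
  then have "component ?E (?V - S) x = component ?E (?V - S) y"
    using comp_join[OF adj_sym comp_self[of x ?E "?V - S"] comp_self[of y ?E "?V - S"]] xy by blast
  then show False using ne by simp
qed

lemma ord2_adj:
  assumes "a \<in> carrier (dihedral n)" "b \<in> carrier (dihedral n)" "a \<noteq> b"
    "group.ord (dihedral n) a = group.ord (dihedral n) b"
  shows "order_supergraph_adj (dihedral n) a b"
  using assms by (auto simp: order_supergraph_adj_def)

lemma yes_dih:
  assumes n3: "n \<ge> 3" and np: "\<not> (\<exists>k. n = 2 ^ k)" and n5: "n \<ge> 5" and n6: "n \<noteq> 6" and n12: "n \<noteq> 12"
  shows "cyclically_separable (carrier (dihedral n)) (order_supergraph_adj (dihedral n))"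
proof -
  let ?V = "carrier (dihedral n)" and ?E = "order_supergraph_adj (dihedral n)"
  let ?o = "group.ord (dihedral n)"
  have n0: "n > 0" using n3 by simp
  have ED: "?o a dvd ?o b \<or> ?o b dvd ?o a" if "?E a b" for a b
    using that by (auto simp: order_supergraph_adj_def)
  obtain k m where nkm: "n = 2^k * m" and om: "odd m" using odd_decomp[OF n0] by blast
  have m1: "m \<noteq> 1" using np nkm by auto
  have m0: "m \<noteq> 0"
  proof
    assume "m = 0" then show False using om by simp
  qed
  show ?thesis
  proof (cases "m \<ge> 5")
    case True
    have dm: "m dvd n" using nkm by simp
    have c: "n div m = 2^k" using nkm m0 by simp
    have cp: "coprime (1::nat) m" "coprime (2::nat) m" "coprime (4::nat) m"
      using om by (simp_all add: coprime_power_left_iff[of 2 2, simplified])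
    have o1: "?o (2^k * 1, 0) = m" "2^k * 1 < n" using ord_rot_d[OF dm n0 cp(1)] True c by auto
    have o2: "?o (2^k * 2, 0) = m" "2^k * 2 < n" using ord_rot_d[OF dm n0 cp(2)] True c by auto
    have o4: "?o (2^k * 4, 0) = m" "2^k * 4 < n" using ord_rot_d[OF dm n0 cp(3)] True c by auto
    have r: "?o (j, 1) = 2" if "j < 3" for j using ord_ref[of j n] that n3 by simp
    have inV: "(j,1) \<in> ?V" if "j < 3" for j using that n3 by (simp add: dih_carrier)
    have inV2: "(2^k*1,0) \<in> ?V" "(2^k*2,0) \<in> ?V" "(2^k*4,0) \<in> ?V"
      using o1 o2 o4 by (simp_all add: dih_carrier)
    have pk: "(2::nat)^k > 0" by simp
    show ?thesis
    proof (rule yes_cut[OF adj_sym, where aA = "(0,1)" and aB = "(1,1)" and aC = "(2,1)"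
          and bA = "(2^k*1,0)" and bB = "(2^k*2,0)" and bC = "(2^k*4,0)"])
      show "{(0, 1), (1, 1), (2, 1)} \<subseteq> ?V" using inV by auto
      show "{(2^k*1,0), (2^k*2,0), (2^k*4,0)} \<subseteq> ?V" using inV2 by auto
      show "?E (0,1) (1,1)" "?E (1,1) (2,1)" "?E (2,1) (0,1)"
        by (rule ord2_adj; use inV r in auto)+
      show "(0::nat, 1::nat) \<noteq> (1, 1)" "(0::nat, 1::nat) \<noteq> (2, 1)" "(1::nat, 1::nat) \<noteq> (2, 1)" by auto
      show "?E (2^k*1,0) (2^k*2,0)" "?E (2^k*2,0) (2^k*4,0)" "?E (2^k*4,0) (2^k*1,0)"
        by (rule ord2_adj; use inV2 o1 o2 o4 pk in auto)+
      show "(2^k*1::nat, 0::nat) \<noteq> (2^k*2, 0)" "(2^k*1::nat, 0::nat) \<noteq> (2^k*4, 0)" "(2^k*2::nat, 0::nat) \<noteq> (2^k*4, 0)"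
        using pk by auto
      show "\<not> ?E u v" if "u \<in> {(0, 1), (1, 1), (2, 1)}" "v \<in> {(2^k*1,0), (2^k*2,0), (2^k*4,0)}" for u v
      proof
        assume "?E u v"
        then have d: "?o u dvd ?o v \<or> ?o v dvd ?o u" by (rule ED)
        have "?o u = 2" using that r by auto
        moreover have "?o v = m" using that o1 o2 o4 by auto
        ultimately show False using d om True by (auto dest: dvd_imp_le)
      qed
    qed
  next
    case False
    then have m3: "m = 3" using om m1 m0 by presburger
    have k3: "k \<ge> 3"
    proof (rule ccontr)
      assume "\<not> k \<ge> 3"
      then have "k = 0 \<or> k = 1 \<or> k = 2" by auto
      then show False using nkm m3 n5 n6 n12 by auto
    qed
    define c :: nat where "c = 2^(k-3)"
    have c0: "c > 0" by (simp add: c_def)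
    have pk: "(2::nat)^k = 2^(k-3) * 2^3" using k3 by (metis le_add_diff_inverse2 power_add)
    have nc: "n = 24 * c" using nkm m3 pk unfolding c_def by simp
    have d8: "8 dvd n" "3 dvd n" "6 dvd n" using nc by simp_all
    have q8: "n div 8 = 3*c" "n div 3 = 8*c" "n div 6 = 4*c" using nc by simp_all
    have cp: "coprime (1::nat) 8" "coprime (3::nat) 8" "coprime (5::nat) 8" "coprime (1::nat) 3"
      "coprime (2::nat) 3" "coprime (1::nat) 6"
      by (simp_all add: coprime_iff_gcd_eq_1 gcd_non_0_nat)
    have a1: "?o (3*c, 0) = 8" "3*c < n" using ord_rot_d[OF d8(1) n0 cp(1)] q8 by auto
    have a2: "?o (9*c, 0) = 8" "9*c < n" using ord_rot_d[OF d8(1) n0 cp(2)] q8 by auto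
    have a3: "?o (15*c, 0) = 8" "15*c < n" using ord_rot_d[OF d8(1) n0 cp(3)] q8 by auto
    have b1: "?o (8*c, 0) = 3" "8*c < n" using ord_rot_d[OF d8(2) n0 cp(4)] q8 by auto
    have b2: "?o (16*c, 0) = 3" "16*c < n" using ord_rot_d[OF d8(2) n0 cp(5)] q8 by auto
    have b3: "?o (4*c, 0) = 6" "4*c < n" using ord_rot_d[OF d8(3) n0 cp(6)] q8 by auto
    have inV: "(3*c,0) \<in> ?V" "(9*c,0) \<in> ?V" "(15*c,0) \<in> ?V" "(8*c,0) \<in> ?V" "(16*c,0) \<in> ?V" "(4*c,0) \<in> ?V"
      using a1 a2 a3 b1 b2 b3 by (simp_all add: dih_carrier)
    show ?thesis
    proof (rule yes_cut[OF adj_sym, where aA = "(3*c,0)" and aB = "(9*c,0)" and aC = "(15*c,0)"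
          and bA = "(8*c,0)" and bB = "(16*c,0)" and bC = "(4*c,0)"])
      show "{(3*c,0), (9*c,0), (15*c,0)} \<subseteq> ?V" using inV by auto
      show "{(8*c,0), (16*c,0), (4*c,0)} \<subseteq> ?V" using inV by auto
      show "?E (3*c,0) (9*c,0)" "?E (9*c,0) (15*c,0)" "?E (15*c,0) (3*c,0)"
        by (rule ord2_adj; use inV a1 a2 a3 c0 in auto)+
      show "(3*c, 0::nat) \<noteq> (9*c, 0)" "(3*c, 0::nat) \<noteq> (15*c, 0)" "(9*c, 0::nat) \<noteq> (15*c, 0)"
        using c0 by auto
      show "?E (8*c,0) (16*c,0)" using inV b1 b2 c0 by (auto simp: order_supergraph_adj_def)
      show "?E (16*c,0) (4*c,0)" using inV b2 b3 c0 by (auto simp: order_supergraph_adj_def)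
      show "?E (4*c,0) (8*c,0)" using inV b1 b3 c0 by (auto simp: order_supergraph_adj_def)
      show "(8*c, 0::nat) \<noteq> (16*c, 0)" "(8*c, 0::nat) \<noteq> (4*c, 0)" "(16*c, 0::nat) \<noteq> (4*c, 0)"
        using c0 by auto
      show "\<not> ?E u v" if "u \<in> {(3*c,0), (9*c,0), (15*c,0)}" "v \<in> {(8*c,0), (16*c,0), (4*c,0)}" for u v
      proof
        assume "?E u v"
        then have d: "?o u dvd ?o v \<or> ?o v dvd ?o u" by (rule ED)
        have "?o u = 8" using that a1 a2 a3 by auto
        moreover have "?o v = 3 \<or> ?o v = 6" using that b1 b2 b3 by auto
        ultimately show False using d by auto
      qed
    qed
  qed
qed

theorem mainTheorem1:
  fixes n :: nat
  assumes "n \<ge> 3"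
  shows "cyclically_separable (carrier (dihedral n)) (order_supergraph_adj (dihedral n))
     \<longleftrightarrow> (\<not> (\<exists>k. n = 2 ^ k)) \<and> n \<ge> 5 \<and> n \<noteq> 6 \<and> n \<noteq> 12"
proof
  assume cs: "cyclically_separable (carrier (dihedral n)) (order_supergraph_adj (dihedral n))"
  have np: "\<not> (\<exists>k. n = 2 ^ k)" using pow2_no assms cs by blast
  moreover have "n \<ge> 5"
  proof (rule ccontr)
    assume "\<not> n \<ge> 5"
    then have "n = 3 \<or> n = 4" using assms by auto
    then show False
    proof
      assume "n = 3" then show False using small_no cs by blast
    next
      assume "n = 4" then have "n = 2^2" by simp
      then show False using np by blast
    qed
  qed
  moreover have "n \<noteq> 6" "n \<noteq> 12" using small_no cs by blast+
  ultimately show "(\<not> (\<exists>k. n = 2 ^ k)) \<and> n \<ge> 5 \<and> n \<noteq> 6 \<and> n \<noteq> 12" by blast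
next
  assume "(\<not> (\<exists>k. n = 2 ^ k)) \<and> n \<ge> 5 \<and> n \<noteq> 6 \<and> n \<noteq> 12"
  then show "cyclically_separable (carrier (dihedral n)) (order_supergraph_adj (dihedral n))"
    using yes_dih assms by blast
qed

end
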